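(* Let $a_1,\dots,a_{k-1}, b, \tilde b \in \mathbb{R}^n$ with $b,\tilde b\neq 0$, and let $U=\mathrm{span}\{a_1,\dots,a_{k-1}\}$, $V=\mathrm{span}\{a_1,\dots,a_{k-1},b\}$, $\tilde V=\mathrm{span}\{a_1,\dots,a_{k-1},\tilde b\}$. Then $$\theta(V,\tilde V)\;\le\;\frac{\pi}{2}\,\frac{\theta(\tilde b, b)}{\theta(\tilde b, U)},$$ where the right-hand side is interpreted as $+\infty$ if $\theta(\tilde b,U)=0$.
   Context: For nonzero vectors $a,b$, $\theta(a,b)$ is the angle between them. For a nonzero vector $a$ and a subspace $V$, $\theta(a,V)=\min_{0\ne b\in V}\theta(a,b)$ (taken to be $\pi/2$ if $V=\{0\}$). For subspaces $U,V$, $\theta(U,V)=\max_{0\ne u\in U}\theta(u,V)$; thus $\theta(U,V)\le\alpha$ iff every nonzero $u\in U$ has some $v\in V$ with $\theta(u,v)\le\alpha$. *)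

theory Defs
  imports "HOL-Analysis.Analysis"
begin

definition vang :: "'a::real_inner \<Rightarrow> 'a \<Rightarrow> real" where
  "vang a b = arccos ((a \<bullet> b) / (norm a * norm b))"

text \<open>Angle between a nonzero vector and a subspace: minimum over nonzero elements
  (the minimum is attained in finite dimension, so it equals the infimum);
  pi/2 if the subspace is trivial.\<close>
definition vsang :: "'a::real_inner \<Rightarrow> 'a set \<Rightarrow> real" where
  "vsang a V = (if V \<subseteq> {0} then pi / 2 else Inf {vang a b | b. b \<in> V \<and> b \<noteq> 0})"

definition ssang :: "'a::real_inner set \<Rightarrow> 'a set \<Rightarrow> real" where
  "ssang U V = (if U \<subseteq> {0} then 0 else Sup {vsang u V | u. u \<in> U \<and> u \<noteq> 0})"

end

theory Submission
  imports Defs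
begin



lemma trig_h:
  fixes x t :: real
  assumes "0 \<le> x" "x \<le> 1" "0 \<le> t" "t \<le> pi/2"
  shows "sin (x*t) * cos t \<le> x * cos (x*t) * sin t"
proof -
  define h where "h = (\<lambda>s::real. x * cos (x* s) * sin s - sin (x* s) * cos s)"
  have "h 0 \<le> h t"
  proof (rule DERIV_nonneg_imp_nondecreasing[OF assms(3)])
    fix s assume s: "0 \<le> s" "s \<le> t"
    have d: "DERIV h s :> (1 - x^2) * sin (x* s) * sin s"
      unfolding h_def
      by (rule derivative_eq_intros refl | simp)+ (simp add: algebra_simps power2_eq_square)
    have "0 \<le> sin (x* s)" using s assms
      by (intro sin_ge_zero) (auto intro: mult_nonneg_nonneg order_trans[OF mult_left_le_one_le])
    moreover have "0 \<le> sin s" using s assms by (intro sin_ge_zero) auto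
    moreover have "0 \<le> 1 - x^2" using assms by (simp add: abs_square_le_1)
    ultimately show "\<exists>y. DERIV h s :> y \<and> y \<ge> 0" using d by (intro exI[of _ "(1 - x^2) * sin (x* s) * sin s"]) auto
  qed
  then show ?thesis by (simp add: h_def)
qed

lemma trig_main:
  fixes x b :: real
  assumes "0 \<le> x" "x \<le> 1" "0 < b" "b \<le> pi/2"
  shows "sin (x*b) \<le> sin b * sin (x*pi/2)"
proof -
  define g where "g = (\<lambda>s::real. sin (x* s) / sin s)"
  have "g b \<le> g (pi/2)"
  proof (rule DERIV_nonneg_imp_nondecreasing[OF assms(4)])
    fix s assume s: "b \<le> s" "s \<le> pi/2"
    have sp: "sin s > 0" using s assms by (intro sin_gt_zero) auto
    have d: "DERIV g s :> (x * cos (x* s) * sin s - sin (x* s) * cos s) / (sin s)^2"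
      unfolding g_def
      apply (rule derivative_eq_intros refl | simp)+
      using sp apply (auto simp: algebra_simps power2_eq_square)
      done
    have "0 \<le> x * cos (x* s) * sin s - sin (x* s) * cos s"
      using trig_h[of x s] s assms by auto
    then show "\<exists>y. DERIV g s :> y \<and> y \<ge> 0" using d by (intro exI) auto
  qed
  moreover have "sin b > 0" using assms by (intro sin_gt_zero) auto
  ultimately show ?thesis by (simp add: g_def field_simps)
qed



lemma ratio_bounds:
  fixes x y :: "'a::real_inner"
  shows "-1 \<le> (x \<bullet> y) / (norm x * norm y) \<and> (x \<bullet> y) / (norm x * norm y) \<le> 1"
proof (cases "norm x * norm y = 0")
  case True then show ?thesis by auto
next
  case False
  then have pos: "norm x * norm y > 0" by (simp add: less_le)
  have "\<bar>x \<bullet> y\<bar> \<le> norm x * norm y" by (rule Cauchy_Schwarz_ineq2)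
  then show ?thesis using pos by (auto simp: divide_le_eq le_divide_eq abs_le_iff)
qed

lemma vang_bounds: "0 \<le> vang x y \<and> vang x y \<le> pi"
  unfolding vang_def using ratio_bounds[of x y] arccos_bounded by blast

lemma cos_vang: "cos (vang x y) = (x \<bullet> y) / (norm x * norm y)"
  unfolding vang_def using ratio_bounds[of x y] by simp

lemma vang_le:
  fixes x y :: "'a::real_inner"
  assumes "0 \<le> g" "g \<le> pi" "x \<bullet> y \<ge> cos g * norm x * norm y" "x \<noteq> 0" "y \<noteq> 0"
  shows "vang x y \<le> g"
proof -
  have pos: "norm x * norm y > 0" using assms by simp
  have "cos g \<le> (x \<bullet> y) / (norm x * norm y)" using assms pos by (simp add: le_divide_eq mult.assoc)
  then have "arccos ((x \<bullet> y) / (norm x * norm y)) \<le> arccos (cos g)"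
    using ratio_bounds[of x y] by (intro arccos_le_arccos) auto
  then show ?thesis using assms by (simp add: vang_def arccos_cos)
qed

lemma vang_minus:
  fixes x y :: "'a::real_inner"
  shows "vang x (-y) = pi - vang x y"
  unfolding vang_def using ratio_bounds[of x y] by (simp add: arccos_minus)

lemma vsang_le_vang:
  fixes v w :: "'a::real_inner"
  assumes "w \<in> W" "w \<noteq> 0"
  shows "vsang v W \<le> vang v w"
proof -
  have "\<not> W \<subseteq> {0}" using assms by auto
  moreover have "Inf {vang v b | b. b \<in> W \<and> b \<noteq> 0} \<le> vang v w"
    by (rule cInf_lower) (use assms vang_bounds in \<open>auto intro!: bdd_belowI[of _ 0]\<close>)
  ultimately show ?thesis by (simp add: vsang_def)
qed

lemma vsang_nonneg: "0 \<le> vsang v W"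
  unfolding vsang_def
  by (auto intro!: cInf_greatest simp: vang_bounds)

lemma vsang_le_pi2:
  fixes v :: "'a::real_inner"
  assumes "subspace W"
  shows "vsang v W \<le> pi/2"
proof (cases "W \<subseteq> {0}")
  case True then show ?thesis by (simp add: vsang_def)
next
  case False
  then obtain w where w: "w \<in> W" "w \<noteq> 0" by auto
  have "-w \<in> W" using assms w by (simp add: subspace_neg)
  then have "vsang v W \<le> vang v w" "vsang v W \<le> vang v (-w)"
    using w vsang_le_vang[of w W v] vsang_le_vang[of "-w" W v] by auto
  then show ?thesis by (simp add: vang_minus)
qed

lemma final_step:
  fixes v w :: "'a::real_inner"
  assumes "v \<noteq> 0" "0 \<le> g" "g < pi/2" "(norm (v - w))^2 \<le> (norm v)^2 * (sin g)^2"
  shows "w \<noteq> 0 \<and> vang v w \<le> g"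
proof -
  have cg: "cos g > 0" using assms by (intro cos_gt_zero_pi) auto
  have sc: "(sin g)^2 = 1 - (cos g)^2" by (simp add: sin_squared_eq)
  have nv: "norm v > 0" using assms by simp
  have e: "(norm (v - w))^2 = (norm v)^2 - 2 * (v \<bullet> w) + (norm w)^2"
    by (simp add: power2_norm_eq_inner inner_diff_left inner_diff_right inner_commute)
  have w0: "w \<noteq> 0"
  proof
    assume "w = 0"
    then have "(norm v)^2 \<le> (norm v)^2 * (1 - (cos g)^2)" using assms(4) sc by simp
    then have "(norm v)^2 * (cos g)^2 \<le> 0" by (simp add: algebra_simps)
    moreover have "(norm v)^2 * (cos g)^2 > 0" using nv cg by simp
    ultimately show False by simp
  qed
  have "2 * (v \<bullet> w) \<ge> (norm v)^2 * (cos g)^2 + (norm w)^2"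
    using assms(4) e sc by (simp add: algebra_simps)
  moreover have "(norm v)^2 * (cos g)^2 + (norm w)^2 \<ge> 2 * (cos g * norm v * norm w)"
    using sum_squares_ge_zero[of "norm v * cos g - norm w" 0]
    by (simp add: power2_eq_square algebra_simps)
  ultimately have "v \<bullet> w \<ge> cos g * norm v * norm w" by simp
  then show ?thesis using vang_le[of g v w] assms w0 by auto
qed




lemma main_geo:
  fixes A :: "'a::euclidean_space set" and b bt v :: 'a
  assumes b0: "b \<noteq> 0" and bt0: "bt \<noteq> 0"
    and bpos: "vsang bt (span A) > 0"
    and ab: "vang bt b < vsang bt (span A)"
    and vV: "v \<in> span (insert b A)" and v0: "v \<noteq> 0"
  shows "\<exists>w\<in>span (insert bt A). w \<noteq> 0 \<and> vang v w \<le> pi/2 * vang bt b / vsang bt (span A)"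
proof -
  define \<beta> where "\<beta> = vsang bt (span A)"
  define \<alpha> where "\<alpha> = vang bt b"
  define \<gamma> where "\<gamma> = pi/2 * \<alpha> / \<beta>"
  have \<beta>pos: "\<beta> > 0" using bpos by (simp add: \<beta>_def)
  have \<beta>le: "\<beta> \<le> pi/2" unfolding \<beta>_def by (rule vsang_le_pi2) simp
  have \<alpha>0: "0 \<le> \<alpha>" using vang_bounds \<alpha>_def by auto
  have \<alpha>\<beta>: "\<alpha> < \<beta>" using ab by (simp add: \<alpha>_def \<beta>_def)
  have \<gamma>0: "0 \<le> \<gamma>" using \<alpha>0 \<beta>pos by (simp add: \<gamma>_def)
  have \<gamma>lt: "\<gamma> < pi/2" using \<alpha>\<beta> \<beta>pos \<alpha>0 by (simp add: \<gamma>_def field_simps)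
  obtain x p where x: "x \<in> span A" and p: "\<And>w. w \<in> span A \<Longrightarrow> orthogonal p w" and bxp: "b = x + p"
    using orthogonal_subspace_decomp_exists[of A b] by metis
  obtain y q where y: "y \<in> span A" and q: "\<And>w. w \<in> span A \<Longrightarrow> orthogonal q w" and byq: "bt = y + q"
    using orthogonal_subspace_decomp_exists[of A bt] by metis
  obtain t where "v - t *\<^sub>R b \<in> span A" using vV span_breakdown_eq by blast
  then obtain u where u: "u \<in> span A" and vu: "v = u + t *\<^sub>R b" by (metis diff_add_cancel)
  have px: "p \<bullet> x = 0" "p \<bullet> y = 0" "p \<bullet> u = 0" using p x y u by (auto simp: orthogonal_def)
  have qx: "q \<bullet> x = 0" "q \<bullet> y = 0" "q \<bullet> u = 0" using q x y u by (auto simp: orthogonal_def)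
  define T where "T = norm bt"
  define B where "B = norm b"
  have Tpos: "T > 0" "B > 0" using b0 bt0 by (auto simp: T_def B_def)
  have cb0: "cos \<beta> \<ge> 0" using \<beta>le \<beta>pos by (intro cos_ge_zero) auto
  have yb: "y \<bullet> y \<le> (cos \<beta>)^2 * T^2"
  proof (cases "y = 0")
    case True then show ?thesis by simp
  next
    case False
    have "\<beta> \<le> vang bt y" unfolding \<beta>_def using vsang_le_vang[OF y False] .
    then have "cos (vang bt y) \<le> cos \<beta>"
      using vang_bounds[of bt y] \<beta>pos \<beta>le by (subst cos_mono_le_eq) auto
    then have "(bt \<bullet> y) / (T * norm y) \<le> cos \<beta>" by (simp add: cos_vang T_def)
    moreover have "bt \<bullet> y = y \<bullet> y" using byq qx by (simp add: inner_add_left)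
    moreover have "T * norm y > 0" using Tpos False by simp
    ultimately have "y \<bullet> y \<le> cos \<beta> * (T * norm y)" by (simp add: divide_le_eq)
    then have "norm y * norm y \<le> (cos \<beta> * T) * norm y" by (simp add: algebra_simps flip: power2_norm_eq_inner power2_eq_square)
    then have "norm y \<le> cos \<beta> * T" using False by simp
    then have "(norm y)^2 \<le> (cos \<beta> * T)^2" by (intro power_mono) auto
    then show ?thesis by (simp add: power2_norm_eq_inner power_mult_distrib)
  qed
  have TT: "T^2 = y \<bullet> y + q \<bullet> q" using byq qx
    by (simp add: T_def power2_norm_eq_inner inner_add_left inner_add_right inner_commute)
  have BB: "B^2 = x \<bullet> x + p \<bullet> p" using bxp px
    by (simp add: B_def power2_norm_eq_inner inner_add_left inner_add_right inner_commute)
  have sb: "(sin \<beta>)^2 = 1 - (cos \<beta>)^2" by (simp add: sin_squared_eq)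
  have qq: "q \<bullet> q \<ge> T^2 * (sin \<beta>)^2"
  proof -
    have "T^2 * (sin \<beta>)^2 = T^2 - (cos \<beta>)^2 * T^2" using sb by (simp add: right_diff_distrib)
    then show ?thesis using TT yb by (simp add: mult.commute)
  qed
  have sbpos: "sin \<beta> > 0" using \<beta>pos \<beta>le by (intro sin_gt_zero) auto
  have qqpos: "q \<bullet> q > 0" using qq sbpos Tpos
    by (smt (verit) mult_pos_pos zero_less_power)
  define s0 where "s0 = (b \<bullet> bt) / B^2"
  define G where "G = (p \<bullet> p) * (q \<bullet> q) - (p \<bullet> q)^2"
  have ca: "cos \<alpha> = (bt \<bullet> b) / (T * B)" by (simp add: \<alpha>_def cos_vang T_def B_def)
  have e1: "(bt - s0 *\<^sub>R b) \<bullet> (bt - s0 *\<^sub>R b) = T^2 * (1 - (cos \<alpha>)^2)"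
  proof -
    have "(bt - s0 *\<^sub>R b) \<bullet> (bt - s0 *\<^sub>R b) = T^2 - 2 * s0 * (b \<bullet> bt) + s0^2 * B^2"
      using power2_norm_eq_inner[of b] power2_norm_eq_inner[of bt]
      by (simp add: T_def B_def inner_diff_left inner_diff_right inner_commute algebra_simps power2_eq_square)
    also have "\<dots> = T^2 - (b \<bullet> bt)^2 / B^2" using Tpos by (simp add: s0_def field_simps power2_eq_square)
    also have "\<dots> = T^2 * (1 - (cos \<alpha>)^2)" using Tpos by (simp add: ca field_simps power2_eq_square inner_commute)
    finally show ?thesis .
  qed
  have e2: "(bt - s0 *\<^sub>R b) \<bullet> (bt - s0 *\<^sub>R b) = (y - s0 *\<^sub>R x) \<bullet> (y - s0 *\<^sub>R x) + (q - s0 *\<^sub>R p) \<bullet> (q - s0 *\<^sub>R p)"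
    using px qx unfolding bxp byq
    by (simp add: inner_diff_left inner_diff_right inner_add_left inner_add_right inner_commute algebra_simps)
  have e3: "(p \<bullet> p) * ((q - s0 *\<^sub>R p) \<bullet> (q - s0 *\<^sub>R p)) - G = (s0 * (p \<bullet> p) - p \<bullet> q)^2"
    by (simp add: G_def inner_diff_left inner_diff_right inner_commute algebra_simps power2_eq_square)
  have G1: "G \<le> (p \<bullet> p) * (T^2 * (1 - (cos \<alpha>)^2))"
  proof -
    have "G \<le> (p \<bullet> p) * ((q - s0 *\<^sub>R p) \<bullet> (q - s0 *\<^sub>R p))" using e3 by (smt (verit) zero_le_power2)
    also have "\<dots> \<le> (p \<bullet> p) * (T^2 * (1 - (cos \<alpha>)^2))"
    proof (rule mult_left_mono)
      have "0 \<le> (y - s0 *\<^sub>R x) \<bullet> (y - s0 *\<^sub>R x)" by simp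
      then show "(q - s0 *\<^sub>R p) \<bullet> (q - s0 *\<^sub>R p) \<le> T^2 * (1 - (cos \<alpha>)^2)" using e1 e2 by linarith
    qed simp
    finally show ?thesis .
  qed
  have tr: "sin \<alpha> \<le> sin \<beta> * sin \<gamma>"
    using trig_main[of "\<alpha>/\<beta>" \<beta>] \<alpha>0 \<alpha>\<beta> \<beta>pos \<beta>le by (simp add: \<gamma>_def field_simps)
  have sa0: "sin \<alpha> \<ge> 0" using \<alpha>0 vang_bounds[of bt b] by (intro sin_ge_zero) (auto simp: \<alpha>_def)
  have "(sin \<alpha>)^2 \<le> (sin \<beta> * sin \<gamma>)^2" using tr sa0 by (intro power_mono) auto
  then have tr2: "1 - (cos \<alpha>)^2 \<le> (sin \<beta>)^2 * (sin \<gamma>)^2" by (simp add: sin_squared_eq power_mult_distrib)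
  have G2: "G \<le> (p \<bullet> p) * (q \<bullet> q) * (sin \<gamma>)^2"
  proof -
    have "G \<le> (p \<bullet> p) * (T^2 * ((sin \<beta>)^2 * (sin \<gamma>)^2))"
      using G1 tr2 by (smt (verit) inner_ge_zero mult_left_mono zero_le_power2)
    also have "\<dots> = (p \<bullet> p) * (sin \<gamma>)^2 * (T^2 * (sin \<beta>)^2)" by (simp add: algebra_simps)
    also have "\<dots> \<le> (p \<bullet> p) * (sin \<gamma>)^2 * (q \<bullet> q)" using qq by (intro mult_left_mono) auto
    finally show ?thesis by (simp add: algebra_simps)
  qed
  define \<sigma> where "\<sigma> = t * (p \<bullet> q) / (q \<bullet> q)"
  define w where "w = u + t *\<^sub>R x + \<sigma> *\<^sub>R q"
  have wW: "w \<in> span (insert bt A)"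
  proof -
    have sub: "span A \<subseteq> span (insert bt A)" by (intro span_mono) auto
    have "q = bt - y" using byq by simp
    then have "q \<in> span (insert bt A)" using y sub by (metis span_base span_diff insertI1 subsetD)
    then show ?thesis unfolding w_def using u x sub
      by (intro span_add span_scale) auto
  qed
  have vw: "v - w = t *\<^sub>R p - \<sigma> *\<^sub>R q" by (simp add: vu w_def bxp algebra_simps)
  have d1: "(norm (v - w))^2 = t^2 * G / (q \<bullet> q)"
  proof -
    have "(norm (v - w))^2 = t^2 * (p \<bullet> p) - 2 * t * \<sigma> * (p \<bullet> q) + \<sigma>^2 * (q \<bullet> q)"
      unfolding vw power2_norm_eq_inner
      by (simp add: inner_diff_left inner_diff_right inner_commute algebra_simps power2_eq_square)
    also have "\<dots> = t^2 * G / (q \<bullet> q)" using qqpos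
      by (simp add: \<sigma>_def G_def field_simps power2_eq_square)
    finally show ?thesis .
  qed
  have d2: "(norm v)^2 = (u + t *\<^sub>R x) \<bullet> (u + t *\<^sub>R x) + t^2 * (p \<bullet> p)"
    using px unfolding vu bxp power2_norm_eq_inner by (simp add: inner_add_left inner_add_right inner_commute algebra_simps power2_eq_square)
  have "(norm (v - w))^2 \<le> t^2 * (p \<bullet> p) * (sin \<gamma>)^2"
  proof -
    have "t^2 * G \<le> t^2 * ((p \<bullet> p) * (q \<bullet> q) * (sin \<gamma>)^2)" using G2 by (intro mult_left_mono) auto
    then have "t^2 * G / (q \<bullet> q) \<le> t^2 * (p \<bullet> p) * (sin \<gamma>)^2" using qqpos by (simp add: divide_le_eq algebra_simps)
    then show ?thesis using d1 by simp
  qed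
  also have "\<dots> \<le> (norm v)^2 * (sin \<gamma>)^2" using d2 by (intro mult_right_mono) auto
  finally have "(norm (v - w))^2 \<le> (norm v)^2 * (sin \<gamma>)^2" .
  then have "w \<noteq> 0 \<and> vang v w \<le> \<gamma>" using final_step[OF v0 \<gamma>0 \<gamma>lt] by blast
  then show ?thesis using wW by (auto simp: \<gamma>_def \<alpha>_def \<beta>_def)
qed




theorem lemma2:
  fixes a :: "nat \<Rightarrow> real ^ 'n" and b bt :: "real ^ 'n" and k :: nat
  assumes "b \<noteq> 0" and "bt \<noteq> 0"
  shows "ereal (ssang (span (a ` {1..<k} \<union> {b})) (span (a ` {1..<k} \<union> {bt})))
         \<le> (if vsang bt (span (a ` {1..<k})) = 0 then \<infinity>
             else ereal (pi / 2 * vang bt b / vsang bt (span (a ` {1..<k}))))"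
proof (cases "vsang bt (span (a ` {1..<k})) = 0")
  case True then show ?thesis by simp
next
  case False
  define A where "A = a ` {1..<k}"
  have eqs: "a ` {1..<k} \<union> {b} = insert b A" "a ` {1..<k} \<union> {bt} = insert bt A"
    by (auto simp: A_def)
  define \<beta> where "\<beta> = vsang bt (span A)"
  have \<beta>pos: "\<beta> > 0" using False vsang_nonneg[of bt "span A"] by (simp add: \<beta>_def A_def)
  define \<gamma> where "\<gamma> = pi / 2 * vang bt b / \<beta>"
  have key: "ssang (span (insert b A)) (span (insert bt A)) \<le> \<gamma>"
  proof -
    have bV: "b \<in> span (insert b A)" by (simp add: span_base)
    then have nt: "\<not> span (insert b A) \<subseteq> {0}" using assms by auto
    have "Sup {vsang u (span (insert bt A)) | u. u \<in> span (insert b A) \<and> u \<noteq> 0} \<le> \<gamma>"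
    proof (rule cSup_least)
      show "{vsang u (span (insert bt A)) | u. u \<in> span (insert b A) \<and> u \<noteq> 0} \<noteq> {}"
        using bV assms by auto
    next
      fix z assume "z \<in> {vsang u (span (insert bt A)) | u. u \<in> span (insert b A) \<and> u \<noteq> 0}"
      then obtain v where v: "v \<in> span (insert b A)" "v \<noteq> 0" and z: "z = vsang v (span (insert bt A))"
        by auto
      show "z \<le> \<gamma>"
      proof (cases "vang bt b < \<beta>")
        case True
        obtain w where w: "w \<in> span (insert bt A)" "w \<noteq> 0" "vang v w \<le> \<gamma>"
          using main_geo[OF assms, of A v] True \<beta>pos v by (auto simp: \<beta>_def \<gamma>_def)
        then show ?thesis using vsang_le_vang[OF w(1,2), of v] z by linarith
      next
        case ge: False
        have "\<gamma> \<ge> pi/2" using ge \<beta>pos by (simp add: \<gamma>_def field_simps)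
        moreover have "z \<le> pi/2" using z vsang_le_pi2[of "span (insert bt A)" v] by simp
        ultimately show ?thesis by linarith
      qed
    qed
    then show ?thesis using nt by (simp add: ssang_def)
  qed
  show ?thesis using False key by (simp add: eqs \<gamma>_def \<beta>_def A_def)
qed


end
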